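(* Let $Y$ be a closed subspace of real Banach spaces $Z$ and $W$, and let $\beta=\mathrm{dens}(Z/Y)$. Suppose the dual unit ball $B(W^* )$, with its weak$^*$ topology, contains a family $\{B_\alpha\}_{\alpha<\beta}$ of pairwise disjoint second category sets such that $B'=\bigcup_{\alpha<\beta}B_\alpha$ satisfies $B'\cap(-B')=\emptyset$. Then there is an isomorphic embedding $E:Z\to m_0(B(W^* ))$ which on $Y$ coincides with the natural embedding $y\mapsto[\,w^*\mapsto w^*(y)\,]$.
   Context: $\mathrm{dens}(V)$ is the density character of a Banach space $V$ (the minimal cardinality of a dense subset). For a compact Hausdorff space $K$: $\ell_\infty(K)$ is the space of bounded real functions on $K$ with the sup norm; $m(K)=\{f\in\ell_\infty(K): \mathrm{supp}(f)\text{ is a first category set in }K\}$; $m_0(K)=\ell_\infty(K)/m(K)$ with the quotient norm, and $[f]$ denotes the class of $f$. Here $K=B(W^* )$ with the weak$^*$ topology. *)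

theory Defs
  imports "HOL-Analysis.Analysis" "HOL-Library.Equipollence"
begin

definition dual_ball :: "('w::real_normed_vector \<Rightarrow>\<^sub>L real) set" where
  "dual_ball = {f. norm f \<le> 1}"

text \<open>The weak* topology on B(W*): the topology induced by pointwise convergence
  (pullback of the product topology on functions W -> R along evaluation).\<close>
definition weakstar_ball :: "('w::real_normed_vector \<Rightarrow>\<^sub>L real) topology" where
  "weakstar_ball = pullback_topology dual_ball blinfun_apply (powertop_real UNIV)"

definition nowhere_dense_in :: "'a topology \<Rightarrow> 'a set \<Rightarrow> bool" where
  "nowhere_dense_in X S \<longleftrightarrow> S \<subseteq> topspace X \<and> X interior_of (X closure_of S) = {}"

definition first_category_in :: "'a topology \<Rightarrow> 'a set \<Rightarrow> bool" where
  "first_category_in X S \<longleftrightarrow> S \<subseteq> topspace X \<and>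
     (\<exists>\<N>. countable \<N> \<and> (\<forall>N\<in>\<N>. nowhere_dense_in X N) \<and> S \<subseteq> \<Union>\<N>)"

definition second_category_in :: "'a topology \<Rightarrow> 'a set \<Rightarrow> bool" where
  "second_category_in X S \<longleftrightarrow> S \<subseteq> topspace X \<and> \<not> first_category_in X S"

text \<open>l_infty(K): bounded real functions on K = topspace X (values off K are irrelevant).\<close>
definition linf :: "'a topology \<Rightarrow> ('a \<Rightarrow> real) set" where
  "linf X = {f. \<exists>C. \<forall>k\<in>topspace X. \<bar>f k\<bar> \<le> C}"

definition sup_norm :: "'a topology \<Rightarrow> ('a \<Rightarrow> real) \<Rightarrow> real" where
  "sup_norm X f = (if topspace X = {} then 0 else (SUP k\<in>topspace X. \<bar>f k\<bar>))"

definition mK :: "'a topology \<Rightarrow> ('a \<Rightarrow> real) set" where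
  "mK X = {g \<in> linf X. first_category_in X {k \<in> topspace X. g k \<noteq> 0}}"

text \<open>m_0(K) = l_infty(K)/m(K): we work with representatives f in l_infty(K);
  [f] = [g] iff f - g in m(K), and the quotient norm of [f] is the distance of f to m(K).\<close>
definition same_class :: "'a topology \<Rightarrow> ('a \<Rightarrow> real) \<Rightarrow> ('a \<Rightarrow> real) \<Rightarrow> bool" where
  "same_class X f g \<longleftrightarrow> (\<lambda>k. f k - g k) \<in> mK X"

definition m0_norm :: "'a topology \<Rightarrow> ('a \<Rightarrow> real) \<Rightarrow> real" where
  "m0_norm X f = (INF g\<in>mK X. sup_norm X (\<lambda>k. f k - g k))"

text \<open>Isomorphic (linear, bounded and bounded below) embedding Z -> m_0(K), given through
  representatives E z in l_infty(K).\<close>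
definition iso_embedding_m0 :: "'a topology \<Rightarrow> ('z::real_normed_vector \<Rightarrow> 'a \<Rightarrow> real) \<Rightarrow> bool" where
  "iso_embedding_m0 X E \<longleftrightarrow>
     (\<forall>z. E z \<in> linf X) \<and>
     (\<forall>a b z z'. same_class X (E (a *\<^sub>R z + b *\<^sub>R z')) (\<lambda>k. a * E z k + b * E z' k)) \<and>
     (\<exists>c C. 0 < c \<and> (\<forall>z. c * norm z \<le> m0_norm X (E z) \<and> m0_norm X (E z) \<le> C * norm z))"

text \<open>Density character of the quotient Z/Y, Y the range of a subspace: the set A has
  cardinality dens(Z/Y), i.e. A is equipollent to a set D \<subseteq> Z whose image is dense in Z/Y
  (equivalently D + Y is dense in Z) and which has minimal cardinality among such sets.\<close>
definition dense_mod :: "'z::real_normed_vector set \<Rightarrow> 'z set \<Rightarrow> bool" where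
  "dense_mod Y D \<longleftrightarrow> closure {d + y | d y. d \<in> D \<and> y \<in> Y} = UNIV"

definition has_card_dens_quot :: "'z::real_normed_vector set \<Rightarrow> 'i set \<Rightarrow> bool" where
  "has_card_dens_quot Y A \<longleftrightarrow>
     (\<exists>D. dense_mod Y D \<and> (\<forall>D'. dense_mod Y D' \<longrightarrow> D \<lesssim> D') \<and> A \<approx> D)"

end

theory Submission
  imports Defs
begin


lemma HB_graph:
  fixes p :: "'a::real_vector \<Rightarrow> real"
  assumes p_add: "\<And>x y. p (x+y) \<le> p x + p y"
    and p_scale: "\<And>c x. c > 0 \<Longrightarrow> p (c *\<^sub>R x) = c * p x"
    and G0s: "subspace G0"
    and G0f: "\<And>x a b. (x,a)\<in>G0 \<Longrightarrow> (x,b)\<in>G0 \<Longrightarrow> a = b"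
    and G0b: "\<And>x a. (x,a)\<in>G0 \<Longrightarrow> a \<le> p x"
  shows "\<exists>g. linear g \<and> (\<forall>x a. (x,a)\<in>G0 \<longrightarrow> g x = a) \<and> (\<forall>x. g x \<le> p x)"
proof -
  define A where "A = {G. subspace G \<and> G0 \<subseteq> G \<and> (\<forall>x a b. (x,a)\<in>G \<longrightarrow> (x,b)\<in>G \<longrightarrow> a = b)
      \<and> (\<forall>x a. (x,a)\<in>G \<longrightarrow> a \<le> p x)}"
  have G0A: "G0 \<in> A" using assms unfolding A_def by auto
  have "\<forall>C\<in>chains A. \<exists>U\<in>A. \<forall>X\<in>C. X \<subseteq> U"
  proof
    fix C assume C: "C \<in> chains A"
    show "\<exists>U\<in>A. \<forall>X\<in>C. X \<subseteq> U"
    proof (cases "C = {}")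
      case True then show ?thesis using G0A by auto
    next
      case False
      have CA: "C \<subseteq> A" using C by (simp add: chains_def)
      have cmp: "\<And>X Y. X \<in> C \<Longrightarrow> Y \<in> C \<Longrightarrow> X \<subseteq> Y \<or> Y \<subseteq> X" using C chainsD by blast
      have two: "\<exists>Z\<in>C. u \<in> Z \<and> v \<in> Z" if uv: "u \<in> \<Union>C" "v \<in> \<Union>C" for u v
      proof -
        obtain X Y where "X\<in>C" "Y\<in>C" "u\<in>X" "v\<in>Y" using uv by (meson UnionE)
        then show ?thesis using cmp[of X Y] by auto
      qed
      have "\<Union>C \<in> A"
        unfolding A_def
      proof (intro CollectI conjI allI impI)
        show "subspace (\<Union>C)"
          unfolding subspace_def
        proof (intro conjI ballI allI)
          obtain X where "X \<in> C" using False by auto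
          then show "0 \<in> \<Union>C" using CA unfolding A_def subspace_def by blast
        next
          fix u v assume "u \<in> \<Union>C" "v \<in> \<Union>C"
          then obtain Z where "Z\<in>C" "u\<in>Z" "v\<in>Z" using two by blast
          then show "u + v \<in> \<Union>C" using CA unfolding A_def subspace_def by blast
        next
          fix c u assume "u \<in> \<Union>C"
          then obtain Z where "Z\<in>C" "u\<in>Z" by blast
          then show "c *\<^sub>R u \<in> \<Union>C" using CA unfolding A_def subspace_def by blast
        qed
        show "G0 \<subseteq> \<Union>C" using False CA unfolding A_def by blast
        fix x a b assume "(x,a) \<in> \<Union>C" "(x,b) \<in> \<Union>C"
        then obtain Z where "Z\<in>C" "(x,a)\<in>Z" "(x,b)\<in>Z" using two by blast
        then show "a = b" using CA unfolding A_def by blast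
      next
        fix x a assume "(x,a) \<in> \<Union>C"
        then show "a \<le> p x" using CA unfolding A_def by blast
      qed
      then show ?thesis by blast
    qed
  qed
  from Zorn_Lemma2[OF this] obtain M where MA: "M \<in> A" and Mmax: "\<And>X. X \<in> A \<Longrightarrow> M \<subseteq> X \<Longrightarrow> X = M"
    by blast
  have Ms: "subspace M" and G0M: "G0 \<subseteq> M"
    and Mf: "\<And>x a b. (x,a)\<in>M \<Longrightarrow> (x,b)\<in>M \<Longrightarrow> a = b"
    and Mb: "\<And>x a. (x,a)\<in>M \<Longrightarrow> a \<le> p x" using MA unfolding A_def by auto
  have M0: "(0,0) \<in> M" using Ms subspace_0 by (metis zero_prod_def)
  have Madd: "(x+y, a+b) \<in> M" if "(x,a)\<in>M" "(y,b)\<in>M" for x y a b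
    using subspace_add[OF Ms that] by simp
  have Mscale: "(c *\<^sub>R x, c * a) \<in> M" if "(x,a)\<in>M" for c x a
    using subspace_scale[OF Ms that, of c] by simp
  have total: "\<exists>a. (x0,a)\<in>M" for x0
  proof (rule ccontr)
    assume nx: "\<not> (\<exists>a. (x0,a)\<in>M)"
    have key: "a - p (s - x0) \<le> p (s' + x0) - a'" if "(s,a)\<in>M" "(s',a')\<in>M" for s a s' a'
    proof -
      have "a + a' \<le> p (s + s')" using Mb[OF Madd[OF that]] .
      also have "\<dots> = p ((s - x0) + (s' + x0))" by (simp add: algebra_simps)
      also have "\<dots> \<le> p (s - x0) + p (s' + x0)" by (rule p_add)
      finally show ?thesis by simp
    qed
    define c where "c = (SUP z\<in>M. snd z - p (fst z - x0))"
    have bdd: "bdd_above ((\<lambda>z. snd z - p (fst z - x0)) ` M)"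
      using key[OF _ M0] by (intro bdd_aboveI2[where M="p (0 + x0) - 0"]) auto
    have c1: "a - p (s - x0) \<le> c" if "(s,a)\<in>M" for s a
      unfolding c_def using cSUP_upper[OF that bdd] by simp
    have c2: "c \<le> p (s' + x0) - a'" if "(s',a')\<in>M" for s' a'
      unfolding c_def using M0 key[OF _ that]
      by (intro cSUP_least) auto
    define M' where "M' = {(s + t *\<^sub>R x0, a + t * c) | s a t. (s,a)\<in>M}"
    have "M' \<in> A"
      unfolding A_def
    proof (intro CollectI conjI allI impI)
      show "subspace M'"
        unfolding subspace_def
      proof (intro conjI ballI allI)
        show "0 \<in> M'" unfolding M'_def using M0 by (auto intro!: exI[of _ 0] simp: zero_prod_def)
      next
        fix u v assume "u \<in> M'" "v \<in> M'"
        then obtain s a t s' a' t' where "(s,a)\<in>M" "(s',a')\<in>M" "u = (s + t *\<^sub>R x0, a + t * c)"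
          "v = (s' + t' *\<^sub>R x0, a' + t' * c)" unfolding M'_def by blast
        then show "u + v \<in> M'" unfolding M'_def using Madd
          by (intro CollectI exI[of _ "s+s'"] exI[of _ "a+a'"] exI[of _ "t+t'"])
             (auto simp: algebra_simps)
      next
        fix r u assume "u \<in> M'"
        then obtain s a t where "(s,a)\<in>M" "u = (s + t *\<^sub>R x0, a + t * c)" unfolding M'_def by blast
        then show "r *\<^sub>R u \<in> M'" unfolding M'_def using Mscale
          by (intro CollectI exI[of _ "r *\<^sub>R s"] exI[of _ "r*a"] exI[of _ "r*t"])
             (auto simp: algebra_simps)
      qed
      show "G0 \<subseteq> M'"
      proof
        fix z assume "z \<in> G0"
        then have "z \<in> M" using G0M by blast
        then show "z \<in> M'" unfolding M'_def
          by (intro CollectI exI[of _ "fst z"] exI[of _ "snd z"] exI[of _ 0]) auto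
      qed
    next
      fix x a b assume "(x,a) \<in> M'" "(x,b) \<in> M'"
      then obtain s1 a1 t1 s2 a2 t2 where m1: "(s1,a1)\<in>M" and m2: "(s2,a2)\<in>M"
        and e: "x = s1 + t1 *\<^sub>R x0" "a = a1 + t1 * c" "x = s2 + t2 *\<^sub>R x0" "b = a2 + t2 * c"
        unfolding M'_def by blast
      have "t1 = t2"
      proof (rule ccontr)
        assume ne: "t1 \<noteq> t2"
        have "(s1 - s2, a1 - a2) \<in> M" using Madd[OF m1 Mscale[OF m2, of "-1"]] by simp
        from Mscale[OF this, of "1/(t2 - t1)"]
        have "((1/(t2-t1)) *\<^sub>R (s1 - s2), (1/(t2-t1)) * (a1 - a2)) \<in> M" .
        moreover have "(1/(t2-t1)) *\<^sub>R (s1 - s2) = x0"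
        proof -
          have "s1 - s2 = (t2 - t1) *\<^sub>R x0" using e by (simp add: algebra_simps)
          then show ?thesis using ne by simp
        qed
        ultimately show False using nx by auto
      qed
      moreover then have "s1 = s2" using e by simp
      ultimately show "a = b" using e Mf m1 m2 by auto
    next
      fix x a assume "(x,a) \<in> M'"
      then obtain s a1 t where m: "(s,a1)\<in>M" and e: "x = s + t *\<^sub>R x0" "a = a1 + t * c"
        unfolding M'_def by blast
      consider "t = 0" | "t > 0" | "t < 0" by linarith
      then show "a \<le> p x"
      proof cases
        case 1 then show ?thesis using e Mb[OF m] by simp
      next
        case 2
        have m': "((1/t) *\<^sub>R s, (1/t) * a1) \<in> M" using Mscale[OF m] .
        have "c \<le> p ((1/t) *\<^sub>R s + x0) - (1/t) * a1" using c2[OF m'] .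
        then have "t * c \<le> t * p ((1/t) *\<^sub>R s + x0) - a1" using 2
          by (simp add: field_simps)
        also have "t * p ((1/t) *\<^sub>R s + x0) = p (t *\<^sub>R ((1/t) *\<^sub>R s + x0))"
          using p_scale[OF 2] by simp
        also have "t *\<^sub>R ((1/t) *\<^sub>R s + x0) = x" using 2 e by (simp add: algebra_simps)
        finally show ?thesis using e by simp
      next
        case 3
        define u where "u = - t"
        have u: "u > 0" using 3 u_def by simp
        have m': "((1/u) *\<^sub>R s, (1/u) * a1) \<in> M" using Mscale[OF m] .
        have "(1/u) * a1 - p ((1/u) *\<^sub>R s - x0) \<le> c" using c1[OF m'] .
        then have "a1 - u * p ((1/u) *\<^sub>R s - x0) \<le> u * c" using u
          by (simp add: field_simps)
        also have "u * p ((1/u) *\<^sub>R s - x0) = p (u *\<^sub>R ((1/u) *\<^sub>R s - x0))"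
          using p_scale[OF u] by simp
        also have "u *\<^sub>R ((1/u) *\<^sub>R s - x0) = x" using u e by (simp add: algebra_simps u_def)
        finally show ?thesis using e u_def by simp
      qed
    qed
    moreover have "M \<subseteq> M'" unfolding M'_def by (force intro: exI[of _ 0])
    ultimately have "M' = M" using Mmax by blast
    moreover have "(x0, c) \<in> M'" unfolding M'_def using M0 by (force intro: exI[of _ 1])
    ultimately show False using nx by blast
  qed
  define g where "g x = (THE a. (x,a)\<in>M)" for x
  have gM: "(x, g x) \<in> M" for x
    unfolding g_def using total[of x] Mf by (metis theI)
  have gu: "g x = a" if "(x,a)\<in>M" for x a using Mf[OF gM that] .
  have "linear g"
    by (rule linearI) (auto intro!: gu Madd Mscale gM)
  moreover have "\<forall>x a. (x,a)\<in>G0 \<longrightarrow> g x = a" using G0M gu by auto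
  moreover have "\<forall>x. g x \<le> p x" using Mb gM by auto
  ultimately show ?thesis by blast
qed



abbreviation "PP \<equiv> (powertop_real UNIV :: ('w::real_normed_vector \<Rightarrow> real) topology)"

lemma topspace_ws: "topspace (weakstar_ball :: ('w::real_normed_vector \<Rightarrow>\<^sub>L real) topology) = dual_ball"
  by (simp add: weakstar_ball_def topspace_pullback_topology)

lemma cont_eval: "continuous_map (weakstar_ball :: ('w::real_normed_vector \<Rightarrow>\<^sub>L real) topology) euclideanreal (\<lambda>w. blinfun_apply w x)"
proof -
  have "continuous_map (weakstar_ball :: ('w \<Rightarrow>\<^sub>L real) topology) euclideanreal ((\<lambda>f. f x) \<circ> blinfun_apply)"
    unfolding weakstar_ball_def
    by (rule continuous_map_pullback) (rule continuous_map_product_projection, simp)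
  then show ?thesis by (simp add: o_def)
qed

lemma cont_uminus: "continuous_map (weakstar_ball :: ('w::real_normed_vector \<Rightarrow>\<^sub>L real) topology) weakstar_ball uminus"
proof -
  have c: "continuous_map (PP::('w \<Rightarrow> real) topology) PP (\<lambda>f x. - f x)"
    unfolding continuous_map_componentwise_UNIV
    by (intro allI continuous_map_minus continuous_map_product_projection) simp
  have "continuous_map (weakstar_ball :: ('w \<Rightarrow>\<^sub>L real) topology) PP ((\<lambda>f x. - f x) \<circ> blinfun_apply)"
    unfolding weakstar_ball_def by (rule continuous_map_pullback[OF c])
  moreover have "(\<lambda>f x. - f x) \<circ> blinfun_apply = blinfun_apply \<circ> (uminus :: ('w \<Rightarrow>\<^sub>L real) \<Rightarrow> _)"
    by (auto simp: fun_eq_iff uminus_blinfun.rep_eq)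
  ultimately show ?thesis
    unfolding weakstar_ball_def
    by (intro continuous_map_pullback') (auto simp: topspace_pullback_topology dual_ball_def)
qed

lemma homeo_uminus: "homeomorphic_map (weakstar_ball :: ('w::real_normed_vector \<Rightarrow>\<^sub>L real) topology) weakstar_ball uminus"
  unfolding homeomorphic_map_maps homeomorphic_maps_def
  by (intro exI[of _ uminus]) (auto simp: cont_uminus)

definition SS :: "('w::real_normed_vector \<Rightarrow> real) set" where
  "SS = blinfun_apply ` dual_ball"

lemma SS_eq: "(SS::('w::real_normed_vector \<Rightarrow> real) set) = {f. linear f \<and> (\<forall>x. \<bar>f x\<bar> \<le> norm x)}"
proof (intro set_eqI iffI)
  fix f :: "'w \<Rightarrow> real" assume "f \<in> SS"
  then obtain w where w: "norm w \<le> 1" "f = blinfun_apply w" unfolding SS_def dual_ball_def by auto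
  have "\<bar>f x\<bar> \<le> norm x" for x
  proof -
    have "\<bar>f x\<bar> \<le> norm w * norm x" using norm_blinfun[of w x] w by simp
    also have "\<dots> \<le> norm x" using w by (simp add: mult_left_le_one_le)
    finally show ?thesis .
  qed
  then show "f \<in> {f. linear f \<and> (\<forall>x. \<bar>f x\<bar> \<le> norm x)}"
    using w blinfun.bounded_linear_right bounded_linear.linear by auto
next
  fix f :: "'w \<Rightarrow> real" assume "f \<in> {f. linear f \<and> (\<forall>x. \<bar>f x\<bar> \<le> norm x)}"
  then have f: "linear f" "\<And>x. \<bar>f x\<bar> \<le> norm x" by auto
  have bl: "bounded_linear f"
    using f by (intro bounded_linear_intro[where K=1]) (auto simp: linear_add linear_scale)
  have "norm (Blinfun f) \<le> 1"
    by (rule norm_blinfun_bound) (use f bl in \<open>auto simp: bounded_linear_Blinfun_apply\<close>)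
  then show "f \<in> SS" unfolding SS_def dual_ball_def using bl
    by (intro image_eqI[of _ _ "Blinfun f"]) (auto simp: bounded_linear_Blinfun_apply)
qed

lemma SS_closed: "closedin (PP::('w::real_normed_vector \<Rightarrow> real) topology) SS"
proof -
  have cp: "continuous_map PP euclideanreal (\<lambda>f::'w\<Rightarrow>real. f x)" for x
    by (rule continuous_map_product_projection) simp
  define K1 where "K1 x = {f \<in> topspace PP. (\<lambda>f::'w\<Rightarrow>real. \<bar>f x\<bar>) f \<in> {..norm x}}" for x
  define K2 where "K2 p = {f \<in> topspace PP. (\<lambda>f::'w\<Rightarrow>real. f (fst p + snd p) - f (fst p) - f (snd p)) f \<in> {0}}" for p
  define K3 where "K3 q = {f \<in> topspace PP. (\<lambda>f::'w\<Rightarrow>real. f (snd q *\<^sub>R fst q) - snd q * f (fst q)) f \<in> {0}}" for q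
  define F where "F = range K1 \<union> range K2 \<union> range K3"
  have c1: "closedin PP (K1 x)" for x unfolding K1_def
    by (intro closedin_continuous_map_preimage[where Y=euclideanreal] continuous_map_real_abs cp) auto
  have c2: "closedin PP (K2 p)" for p unfolding K2_def
    by (intro closedin_continuous_map_preimage[where Y=euclideanreal] continuous_map_diff cp) auto
  have c3: "closedin PP (K3 q)" for q unfolding K3_def
    by (intro closedin_continuous_map_preimage[where Y=euclideanreal] continuous_map_diff cp continuous_map_real_mult_left) auto
  have "closedin PP (\<Inter>F)"
  proof (rule closedin_Inter)
    show "F \<noteq> {}" unfolding F_def by auto
    fix K assume "K \<in> F"
    then show "closedin PP K" unfolding F_def using c1 c2 c3 by blast
  qed
  moreover have "\<Inter>F = SS"
  proof (intro set_eqI iffI)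
    fix f assume "f \<in> \<Inter>F"
    then have fF: "\<And>K. K \<in> F \<Longrightarrow> f \<in> K" by blast
    have a: "\<bar>f x\<bar> \<le> norm x" for x
      using fF[of "K1 x"] unfolding F_def by (simp add: rev_image_eqI) (simp add: K1_def)
    have b: "f (x+y) - f x - f y = 0" for x y
      using fF[of "K2 (x,y)"] unfolding F_def by (simp add: rev_image_eqI) (simp add: K2_def)
    have c: "f (c *\<^sub>R x) - c * f x = 0" for x c
      using fF[of "K3 (x,c)"] unfolding F_def by (simp add: rev_image_eqI) (simp add: K3_def)
    have "linear f" by (rule linearI) (use b c in \<open>auto simp: algebra_simps\<close>)
    then show "f \<in> SS" unfolding SS_eq using a by blast
  next
    fix f :: "'w \<Rightarrow> real" assume "f \<in> SS"
    then have l: "linear f" and a: "\<And>x. \<bar>f x\<bar> \<le> norm x" unfolding SS_eq by auto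
    show "f \<in> \<Inter>F"
    proof
      fix K assume "K \<in> F"
      then consider x where "K = K1 x" | p where "K = K2 p" | q where "K = K3 q" unfolding F_def by blast
      then show "f \<in> K"
        by cases (simp_all add: K1_def K2_def K3_def a linear_add[OF l] linear_scale[OF l])
    qed
  qed
  ultimately show ?thesis by simp
qed

lemma homeo_SS: "homeomorphic_map (weakstar_ball :: ('w::real_normed_vector \<Rightarrow>\<^sub>L real) topology) (subtopology PP SS) blinfun_apply"
proof (rule bijective_open_imp_homeomorphic_map)
  show "continuous_map (weakstar_ball :: ('w \<Rightarrow>\<^sub>L real) topology) (subtopology PP SS) blinfun_apply"
  proof (rule continuous_map_into_subtopology)
    have "continuous_map (weakstar_ball :: ('w \<Rightarrow>\<^sub>L real) topology) PP (id \<circ> blinfun_apply)"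
      unfolding weakstar_ball_def by (rule continuous_map_pullback) simp
    then show "continuous_map (weakstar_ball :: ('w \<Rightarrow>\<^sub>L real) topology) PP blinfun_apply" by simp
    show "blinfun_apply \<in> topspace (weakstar_ball :: ('w \<Rightarrow>\<^sub>L real) topology) \<rightarrow> SS"
      by (simp add: topspace_ws SS_def)
  qed
  show "open_map (weakstar_ball :: ('w \<Rightarrow>\<^sub>L real) topology) (subtopology PP SS) blinfun_apply"
    unfolding open_map_def
  proof (intro allI impI)
    fix U assume "openin (weakstar_ball :: ('w \<Rightarrow>\<^sub>L real) topology) U"
    then obtain V where V: "openin PP V" "U = blinfun_apply -` V \<inter> dual_ball"
      unfolding weakstar_ball_def openin_pullback_topology by blast
    have "blinfun_apply ` U = SS \<inter> V" unfolding V(2) SS_def by auto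
    then show "openin (subtopology PP SS) (blinfun_apply ` U)"
      using V(1) by (auto simp: openin_subtopology)
  qed
  show "blinfun_apply ` topspace (weakstar_ball :: ('w \<Rightarrow>\<^sub>L real) topology) = topspace (subtopology PP SS)"
    by (simp add: topspace_ws SS_def)
  show "inj_on blinfun_apply (topspace (weakstar_ball :: ('w \<Rightarrow>\<^sub>L real) topology))"
    by (simp add: inj_on_def blinfun_eqI)
qed

lemma homeo_space_SS: "(weakstar_ball :: ('w::real_normed_vector \<Rightarrow>\<^sub>L real) topology) homeomorphic_space (subtopology PP (SS::('w \<Rightarrow> real) set))"
proof -
  obtain g where "homeomorphic_maps (weakstar_ball :: ('w \<Rightarrow>\<^sub>L real) topology) (subtopology PP (SS::('w \<Rightarrow> real) set)) blinfun_apply g"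
    using homeo_SS[where 'w='w] unfolding homeomorphic_map_maps by (elim exE)
  then show ?thesis unfolding homeomorphic_space_def by (intro exI)
qed

lemma compact_ws: "compact_space (weakstar_ball :: ('w::real_normed_vector \<Rightarrow>\<^sub>L real) topology)"
proof -
  have "compactin PP (PiE UNIV (\<lambda>x::'w. {-norm x..norm x}))"
    by (simp add: compactin_PiE)
  moreover have "(SS::('w \<Rightarrow> real) set) \<subseteq> PiE UNIV (\<lambda>x::'w. {-norm x..norm x})"
  proof
    fix f :: "'w \<Rightarrow> real" assume "f \<in> SS"
    then have "\<bar>f x\<bar> \<le> norm x" for x unfolding SS_eq by simp
    then have "f x \<in> {-norm x..norm x}" for x by (metis abs_le_iff atLeastAtMost_iff minus_le_iff)
    then show "f \<in> PiE UNIV (\<lambda>x::'w. {-norm x..norm x})" by (simp add: PiE_iff)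
  qed
  ultimately have "compactin PP (SS::('w \<Rightarrow> real) set)"
    by (rule closed_compactin) (rule SS_closed)
  then have "compact_space (subtopology PP (SS::('w \<Rightarrow> real) set))"
    by (rule compact_space_subtopology)
  then show ?thesis
    using homeomorphic_compact_space[OF homeo_space_SS[where 'w='w]] by simp
qed

lemma Hausdorff_ws: "Hausdorff_space (weakstar_ball :: ('w::real_normed_vector \<Rightarrow>\<^sub>L real) topology)"
proof -
  have "Hausdorff_space (subtopology PP (SS::('w \<Rightarrow> real) set))"
    by (rule Hausdorff_space_subtopology) (simp add: Hausdorff_space_product_topology)
  then show ?thesis
    using homeomorphic_Hausdorff_space[OF homeo_space_SS[where 'w='w]] by simp
qed

lemma open_not_first_category:
  assumes "openin (weakstar_ball :: ('w::real_normed_vector \<Rightarrow>\<^sub>L real) topology) U" "U \<noteq> {}"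
  shows "\<not> first_category_in weakstar_ball U"
proof
  let ?X = "weakstar_ball :: ('w \<Rightarrow>\<^sub>L real) topology"
  assume "first_category_in ?X U"
  then obtain N where N: "countable N" "\<And>S. S \<in> N \<Longrightarrow> nowhere_dense_in ?X S" "U \<subseteq> \<Union>N"
    unfolding first_category_in_def by blast
  have "?X interior_of \<Union>((\<lambda>S. ?X closure_of S) ` N) = {}"
  proof (rule Baire_category_alt)
    show "completely_metrizable_space ?X \<or> locally_compact_space ?X \<and> regular_space ?X"
      using compact_imp_locally_compact_space[OF compact_ws[where 'w='w]]
        compact_Hausdorff_imp_regular_space[OF compact_ws[where 'w='w] Hausdorff_ws[where 'w='w]]
      by simp
    show "countable ((\<lambda>S. ?X closure_of S) ` N)" using N(1) by simp
    fix T assume "T \<in> (\<lambda>S. ?X closure_of S) ` N"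
    then obtain S where S: "S \<in> N" "T = ?X closure_of S" by blast
    then show "closedin ?X T \<and> ?X interior_of T = {}"
      using N(2)[OF S(1)] unfolding nowhere_dense_in_def by simp
  qed
  moreover have "U \<subseteq> \<Union>((\<lambda>S. ?X closure_of S) ` N)"
  proof
    fix u assume "u \<in> U"
    then obtain S where S: "S \<in> N" "u \<in> S" using N(3) by blast
    have "S \<subseteq> topspace ?X" using N(2)[OF S(1)] unfolding nowhere_dense_in_def by simp
    then have "u \<in> ?X closure_of S" using closure_of_subset S(2) by blast
    then show "u \<in> \<Union>((\<lambda>S. ?X closure_of S) ` N)" using S(1) by blast
  qed
  then have "U \<subseteq> ?X interior_of \<Union>((\<lambda>S. ?X closure_of S) ` N)"
    using assms(1) interior_of_maximal by blast
  ultimately show False using assms(2) by blast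
qed





lemma HB_norm:
  fixes G0 :: "('a::real_normed_vector \<times> real) set"
  assumes C: "C \<ge> 0" and G0s: "subspace G0"
    and G0f: "\<And>x a b. (x,a)\<in>G0 \<Longrightarrow> (x,b)\<in>G0 \<Longrightarrow> a = b"
    and G0b: "\<And>x a. (x,a)\<in>G0 \<Longrightarrow> a \<le> C * norm x"
  shows "\<exists>g. linear g \<and> (\<forall>x a. (x,a)\<in>G0 \<longrightarrow> g x = a) \<and> (\<forall>x. \<bar>g x\<bar> \<le> C * norm x)"
proof -
  obtain g where g: "linear g" "\<forall>x a. (x,a)\<in>G0 \<longrightarrow> g x = a" "\<forall>x. g x \<le> C * norm x"
  proof -
    have "\<And>x y. C * norm (x + y) \<le> C * norm x + C * norm y"
      using C by (metis distrib_left mult_left_mono norm_triangle_ineq)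
    moreover have "\<And>c x. c > 0 \<Longrightarrow> C * norm (c *\<^sub>R x) = c * (C * norm x)" by simp
    ultimately have "\<exists>g. linear g \<and> (\<forall>x a. (x, a) \<in> G0 \<longrightarrow> g x = a) \<and> (\<forall>x. g x \<le> C * norm x)"
      using HB_graph[of "\<lambda>x. C * norm x" G0] G0s G0f G0b by blast
    then show ?thesis using that by blast
  qed
  have "\<bar>g x\<bar> \<le> C * norm x" for x
    using g(3)[rule_format, of x] g(3)[rule_format, of "-x"] linear_neg[OF g(1), of x] by simp
  then show ?thesis using g by blast
qed




lemma fcI: "S \<subseteq> topspace X \<Longrightarrow> countable N \<Longrightarrow> (\<And>M. M \<in> N \<Longrightarrow> nowhere_dense_in X M) \<Longrightarrow> S \<subseteq> \<Union>N
  \<Longrightarrow> first_category_in X S"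
  unfolding first_category_in_def by blast

lemma fcE:
  assumes "first_category_in X S"
  obtains N where "S \<subseteq> topspace X" "countable N" "\<And>M. M \<in> N \<Longrightarrow> nowhere_dense_in X M" "S \<subseteq> \<Union>N"
  using assms unfolding first_category_in_def by blast

lemma fc_subset: "first_category_in X S \<Longrightarrow> T \<subseteq> S \<Longrightarrow> first_category_in X T"
  by (erule fcE) (rule fcI, auto)

lemma fc_Un: "first_category_in X S \<Longrightarrow> first_category_in X T \<Longrightarrow> first_category_in X (S \<union> T)"
proof -
  assume s: "first_category_in X S" and t: "first_category_in X T"
  obtain N1 where a: "S \<subseteq> topspace X" "countable N1" "\<And>M. M \<in> N1 \<Longrightarrow> nowhere_dense_in X M" "S \<subseteq> \<Union>N1"
    by (rule fcE[OF s]) (rule that, assumption+)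
  obtain N2 where b: "T \<subseteq> topspace X" "countable N2" "\<And>M. M \<in> N2 \<Longrightarrow> nowhere_dense_in X M" "T \<subseteq> \<Union>N2"
    by (rule fcE[OF t]) (rule that, assumption+)
  show ?thesis
  proof (rule fcI[where N="N1 \<union> N2"])
    show "S \<union> T \<subseteq> topspace X" using a(1) b(1) by (rule Un_least)
    show "countable (N1 \<union> N2)" using a(2) b(2) by simp
    show "nowhere_dense_in X M" if "M \<in> N1 \<union> N2" for M using that a(3) b(3) by (cases "M \<in> N1") auto
    show "S \<union> T \<subseteq> \<Union>(N1 \<union> N2)" using a(4) b(4) by auto
  qed
qed

lemma fc_homeo:
  assumes h: "homeomorphic_map X Y h" and fc: "first_category_in X S"
  shows "first_category_in Y (h ` S)"
proof -
  obtain N where N: "S \<subseteq> topspace X" "countable N" "\<And>M. M \<in> N \<Longrightarrow> nowhere_dense_in X M" "S \<subseteq> \<Union>N"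
    by (rule fcE[OF fc]) (rule that, assumption+)
  have surj: "h ` topspace X = topspace Y" by (rule homeomorphic_imp_surjective_map[OF h])
  have nd: "nowhere_dense_in Y (h ` M)" if "M \<in> N" for M
  proof -
    have M: "M \<subseteq> topspace X" "X interior_of (X closure_of M) = {}"
      using N(3)[OF that] unfolding nowhere_dense_in_def by auto
    have "Y closure_of (h ` M) = h ` (X closure_of M)"
      by (rule homeomorphic_map_closure_of[OF h M(1)])
    moreover have "Y interior_of (h ` (X closure_of M)) = h ` (X interior_of (X closure_of M))"
      by (rule homeomorphic_map_interior_of[OF h]) (rule closure_of_subset_topspace)
    moreover have "h ` M \<subseteq> topspace Y"
      using M(1) surj by (metis image_mono)
    ultimately show ?thesis unfolding nowhere_dense_in_def using M(2) by simp
  qed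
  show ?thesis
  proof (rule fcI[where N="(image h) ` N"])
    show "h ` S \<subseteq> topspace Y" using N(1) surj by (metis image_mono)
    show "countable ((image h) ` N)" using N(2) by simp
    show "nowhere_dense_in Y M" if "M \<in> (image h) ` N" for M using that nd by auto
    show "h ` S \<subseteq> \<Union>((image h) ` N)" using N(4) by auto
  qed
qed

lemma sup_norm_lower:
  assumes F: "F \<in> linf X" and g: "g \<in> mK X" and S: "second_category_in X S"
    and t: "\<And>k. k \<in> S \<Longrightarrow> t \<le> \<bar>F k\<bar>"
  shows "t \<le> sup_norm X (\<lambda>k. F k - g k)"
proof -
  have Ssub: "S \<subseteq> topspace X" and nS: "\<not> first_category_in X S"
    using S unfolding second_category_in_def by auto
  have gfc: "first_category_in X {k \<in> topspace X. g k \<noteq> 0}" and gl: "g \<in> linf X"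
    using g unfolding mK_def by auto
  have "\<not> S \<subseteq> {k \<in> topspace X. g k \<noteq> 0}" using fc_subset[OF gfc] nS by blast
  then obtain k where k: "k \<in> S" "g k = 0" using Ssub by blast
  obtain C1 where C1: "\<forall>k\<in>topspace X. \<bar>F k\<bar> \<le> C1" using F unfolding linf_def by blast
  obtain C2 where C2: "\<forall>k\<in>topspace X. \<bar>g k\<bar> \<le> C2" using gl unfolding linf_def by blast
  have bdd: "bdd_above ((\<lambda>k. \<bar>F k - g k\<bar>) ` topspace X)"
  proof (rule bdd_aboveI2[where M="C1 + C2"])
    fix k assume k: "k \<in> topspace X"
    have "\<bar>F k - g k\<bar> \<le> \<bar>F k\<bar> + \<bar>g k\<bar>" by (rule abs_triangle_ineq4)
    then show "\<bar>F k - g k\<bar> \<le> C1 + C2" using C1 C2 k by fastforce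
  qed
  have kt: "k \<in> topspace X" using k Ssub by blast
  then have "topspace X \<noteq> {}" using empty_iff by metis
  then have "sup_norm X (\<lambda>k. F k - g k) = (SUP k\<in>topspace X. \<bar>F k - g k\<bar>)"
    unfolding sup_norm_def by simp
  moreover have "\<bar>F k - g k\<bar> \<le> (SUP k\<in>topspace X. \<bar>F k - g k\<bar>)"
    by (rule cSUP_upper[OF kt bdd])
  ultimately show ?thesis using t[OF k(1)] k(2) by simp
qed

lemma sup_norm_upper:
  assumes "topspace X \<noteq> {}" "\<And>k. k \<in> topspace X \<Longrightarrow> \<bar>F k\<bar> \<le> M"
  shows "sup_norm X F \<le> M"
proof -
  have "(SUP k\<in>topspace X. \<bar>F k\<bar>) \<le> M" by (rule cSUP_least[OF assms(1) assms(2)])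
  then show ?thesis unfolding sup_norm_def using assms(1) by simp
qed

lemma fc_empty: "first_category_in X {}"
  unfolding first_category_in_def by (intro conjI exI[of _ "{}"]) simp_all

lemma zero_mK:
  assumes "\<And>k. k \<in> topspace X \<Longrightarrow> h k = 0"
  shows "h \<in> mK X"
proof -
  have "h \<in> linf X" unfolding linf_def using assms by (intro CollectI exI[of _ 0]) simp
  moreover have "{k \<in> topspace X. h k \<noteq> 0} = {}" using assms by blast
  then have "first_category_in X {k \<in> topspace X. h k \<noteq> 0}" using fc_empty by metis
  ultimately show ?thesis unfolding mK_def by blast
qed



theorem mainTheorem11:
  fixes jZ :: "'y::banach \<Rightarrow> 'z::banach"
    and jW :: "'y \<Rightarrow> 'w::banach"
    and A :: "'i set"
    and B :: "'i \<Rightarrow> ('w \<Rightarrow>\<^sub>L real) set"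
  assumes "linear jZ" and "\<And>y. norm (jZ y) = norm y"
    and "linear jW" and "\<And>y. norm (jW y) = norm y"
    and "has_card_dens_quot (range jZ) A"
    and "\<And>\<alpha>. \<alpha> \<in> A \<Longrightarrow> second_category_in weakstar_ball (B \<alpha>)"
    and "\<And>\<alpha> \<gamma>. \<alpha> \<in> A \<Longrightarrow> \<gamma> \<in> A \<Longrightarrow> \<alpha> \<noteq> \<gamma> \<Longrightarrow> B \<alpha> \<inter> B \<gamma> = {}"
    and "(\<Union>\<alpha>\<in>A. B \<alpha>) \<inter> uminus ` (\<Union>\<alpha>\<in>A. B \<alpha>) = {}"
  shows "\<exists>E :: 'z \<Rightarrow> ('w \<Rightarrow>\<^sub>L real) \<Rightarrow> real.
           iso_embedding_m0 weakstar_ball E \<and>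
           (\<forall>y. same_class weakstar_ball (E (jZ y)) (\<lambda>w'. blinfun_apply w' (jW y)))"
proof -
  let ?X = "weakstar_ball :: ('w \<Rightarrow>\<^sub>L real) topology"
  note jZl = assms(1) and jZn = assms(2) and jWl = assms(3) and jWn = assms(4)
  define Y where "Y = range jZ"
  obtain D fA where dm: "dense_mod Y D" and bij: "bij_betw fA A D"
    using assms(5) unfolding has_card_dens_quot_def eqpoll_def Y_def by blast
  have jZinj: "a = b" if "jZ a = jZ b" for a b
  proof -
    have "norm (a - b) = norm (jZ a - jZ b)" using jZn[of "a - b"] linear_diff[OF jZl] by simp
    then show ?thesis using that by simp
  qed
  have Yne: "Y \<noteq> {}" unfolding Y_def by simp
  have Yadd: "a + b \<in> Y" if ab: "a \<in> Y" "b \<in> Y" for a b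
  proof -
    obtain p q where "a = jZ p" "b = jZ q" using ab unfolding Y_def by blast
    then have "a + b = jZ (p + q)" by (simp add: linear_add[OF jZl])
    then show ?thesis unfolding Y_def by simp
  qed
  have "\<exists>\<phi>. linear \<phi> \<and> (\<forall>y. \<phi> (jZ y) = blinfun_apply w (jW y)) \<and> (\<forall>z. \<bar>\<phi> z\<bar> \<le> norm w * norm z)" for w
  proof -
    have lw: "linear (blinfun_apply w)" by (rule bounded_linear.linear[OF blinfun.bounded_linear_right])
    let ?h = "\<lambda>y. (jZ y, blinfun_apply w (jW y))"
    have lin: "linear ?h"
      by (rule linearI) (simp_all add: linear_add[OF jZl] linear_add[OF jWl] linear_add[OF lw]
          linear_scale[OF jZl] linear_scale[OF jWl] linear_scale[OF lw])
    have "\<exists>g. linear g \<and> (\<forall>x a. (x,a)\<in>range ?h \<longrightarrow> g x = a) \<and> (\<forall>x. \<bar>g x\<bar> \<le> norm w * norm x)"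
    proof (rule HB_norm)
      show "subspace (range ?h)" by (rule linear_subspace_image[OF lin subspace_UNIV])
      show "a = b" if hyp: "(x,a) \<in> range ?h" "(x,b) \<in> range ?h" for x a b
        using that jZinj by auto
      show "a \<le> norm w * norm x" if hyp: "(x,a) \<in> range ?h" for x a
      proof -
        obtain y where y: "x = jZ y" "a = blinfun_apply w (jW y)" using hyp by auto
        have "a \<le> norm w * norm (jW y)" using norm_blinfun[of w "jW y"] y by simp
        then show ?thesis using y jZn jWn by simp
      qed
    qed simp
    then show ?thesis by auto
  qed
  then obtain \<phi> where \<phi>l: "\<And>w. linear (\<phi> w)" and \<phi>Y: "\<And>w y. \<phi> w (jZ y) = blinfun_apply w (jW y)"
    and \<phi>b: "\<And>w z. \<bar>\<phi> w z\<bar> \<le> norm w * norm z"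
    by metis
  have "\<exists>\<psi>. linear \<psi> \<and> (\<forall>y. \<psi> (jZ y) = 0) \<and> \<psi> d = infdist d Y \<and> (\<forall>z. \<bar>\<psi> z\<bar> \<le> norm z)" for d
  proof -
    define \<delta> where "\<delta> = infdist d Y"
    let ?h = "\<lambda>p::'y \<times> real. (jZ (fst p) + snd p *\<^sub>R d, snd p * \<delta>)"
    have lin: "linear ?h"
      by (rule linearI) (simp_all add: linear_add[OF jZl] linear_scale[OF jZl] algebra_simps)
    have "\<exists>g. linear g \<and> (\<forall>x a. (x,a)\<in>range ?h \<longrightarrow> g x = a) \<and> (\<forall>x. \<bar>g x\<bar> \<le> 1 * norm x)"
    proof (rule HB_norm)
      show "subspace (range ?h)" by (rule linear_subspace_image[OF lin subspace_UNIV])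
      show "a = b" if hyp: "(x,a) \<in> range ?h" "(x,b) \<in> range ?h" for x a b
      proof -
        obtain p1 p2 where p: "(x,a) = ?h p1" "(x,b) = ?h p2" using hyp by blast
        obtain y1 t1 where p1: "p1 = (y1,t1)" by (cases p1)
        obtain y2 t2 where p2: "p2 = (y2,t2)" by (cases p2)
        have e: "x = jZ y1 + t1 *\<^sub>R d" "a = t1 * \<delta>" "x = jZ y2 + t2 *\<^sub>R d" "b = t2 * \<delta>"
          using p unfolding p1 p2 by simp_all
        show ?thesis
        proof (cases "t1 = t2 \<or> \<delta> = 0")
          case True then show ?thesis using e by auto
        next
          case False
          then have ne: "t2 - t1 \<noteq> 0" and dn: "\<delta> \<noteq> 0" by auto
          have "jZ y1 - jZ y2 = (t2 - t1) *\<^sub>R d" using e by (simp add: algebra_simps)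
          then have "d = (1/(t2 - t1)) *\<^sub>R (jZ y1 - jZ y2)" using ne by simp
          also have "\<dots> = jZ ((1/(t2 - t1)) *\<^sub>R (y1 - y2))"
            by (simp add: linear_scale[OF jZl] linear_diff[OF jZl])
          finally have "d \<in> Y" unfolding Y_def by simp
          then have "\<delta> = 0" unfolding \<delta>_def by simp
          then show ?thesis using dn by simp
        qed
      qed
      show "a \<le> 1 * norm x" if hyp: "(x,a) \<in> range ?h" for x a
      proof -
        obtain p1 where p: "(x,a) = ?h p1" using hyp by blast
        obtain y t where p1: "p1 = (y,t)" by (cases p1)
        have e: "x = jZ y + t *\<^sub>R d" "a = t * \<delta>" using p unfolding p1 by simp_all
        show ?thesis
        proof (cases "t > 0")
          case False
          then have "a \<le> 0" using e infdist_nonneg[of d Y] unfolding \<delta>_def by (simp add: mult_nonpos_nonneg)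
          then show ?thesis using norm_ge_zero[of x] by linarith
        next
          case True
          have "jZ ((- 1/t) *\<^sub>R y) \<in> Y" unfolding Y_def by simp
          then have "\<delta> \<le> dist d (jZ ((- 1/t) *\<^sub>R y))" unfolding \<delta>_def by (rule infdist_le)
          also have "\<dots> = norm (d + (1/t) *\<^sub>R jZ y)"
            by (simp add: dist_norm linear_scale[OF jZl] linear_neg[OF jZl])
          finally have "t * \<delta> \<le> t * norm (d + (1/t) *\<^sub>R jZ y)" using True by simp
          also have "\<dots> = norm (t *\<^sub>R (d + (1/t) *\<^sub>R jZ y))" using True by simp
          also have "t *\<^sub>R (d + (1/t) *\<^sub>R jZ y) = x" using True e by (simp add: algebra_simps)
          finally show ?thesis using e by simp
        qed
      qed
    qed simp
    then obtain g where g: "linear g" "\<forall>x a. (x,a)\<in>range ?h \<longrightarrow> g x = a" "\<forall>x. \<bar>g x\<bar> \<le> 1 * norm x"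
      by blast
    have "g (jZ y) = 0" for y using g(2)[rule_format, of "jZ y" 0] by (force intro: image_eqI[of _ _ "(y,0)"])
    moreover have "g d = \<delta>" using g(2)[rule_format, of d \<delta>] by (force intro: image_eqI[of _ _ "(0,1)"] simp: linear_0[OF jZl])
    ultimately show ?thesis using g unfolding \<delta>_def by auto
  qed
  then obtain \<psi> where \<psi>l: "\<And>d. linear (\<psi> d)" and \<psi>Y: "\<And>d y. \<psi> d (jZ y) = 0"
    and \<psi>d: "\<And>d. \<psi> d d = infdist d Y" and \<psi>b: "\<And>d z. \<bar>\<psi> d z\<bar> \<le> norm z"
    by metis
  define sel where "sel w = (SOME \<alpha>. \<alpha> \<in> A \<and> w \<in> B \<alpha>)" for w
  define E where "E z w = (if \<exists>\<alpha>\<in>A. w \<in> B \<alpha> then \<phi> w z + \<psi> (fA (sel w)) z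
      else if \<exists>\<alpha>\<in>A. - w \<in> B \<alpha> then - \<phi> (- w) z + \<psi> (fA (sel (- w))) z else \<phi> w z)" for z w
  have lc: "l (a *\<^sub>R z + b *\<^sub>R z') = a * l z + b * l z'" if "linear l" for l :: "'z \<Rightarrow> real" and a b z z'
    by (simp add: linear_add[OF that] linear_scale[OF that])
  have Llin: "linear (\<lambda>z. E z w)" for w
  proof (cases "\<exists>\<alpha>\<in>A. w \<in> B \<alpha>")
    case True
    then have "(\<lambda>z. E z w) = (\<lambda>z. \<phi> w z + \<psi> (fA (sel w)) z)" unfolding E_def by simp
    then show ?thesis using linear_compose_add[OF \<phi>l \<psi>l] by simp
  next
    case F1: False
    show ?thesis
    proof (cases "\<exists>\<alpha>\<in>A. - w \<in> B \<alpha>")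
      case True
      then have "(\<lambda>z. E z w) = (\<lambda>z. - \<phi> (- w) z + \<psi> (fA (sel (- w))) z)" unfolding E_def using F1 by simp
      then show ?thesis using linear_compose_add[OF linear_compose_neg[OF \<phi>l] \<psi>l] by simp
    next
      case False
      then have "(\<lambda>z. E z w) = \<phi> w" unfolding E_def using F1 by (simp add: fun_eq_iff)
      then show ?thesis using \<phi>l by simp
    qed
  qed
  have Elin: "E (a *\<^sub>R z + b *\<^sub>R z') w = a * E z w + b * E z' w" for a b z z' w
    using lc[OF Llin[of w], of a z b z'] by simp
  have \<phi>b1: "\<bar>\<phi> w z\<bar> \<le> norm z" if nw: "norm w \<le> 1" for w z
  proof -
    have "norm w * norm z \<le> 1 * norm z" by (rule mult_right_mono[OF nw norm_ge_zero])
    then show ?thesis using \<phi>b[of w z] by linarith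
  qed
  have Eb: "\<bar>E z w\<bar> \<le> 2 * norm z" if wb: "w \<in> dual_ball" for z w
  proof -
    have b1: "\<bar>\<phi> w z\<bar> \<le> norm z" using wb by (intro \<phi>b1) (simp add: dual_ball_def)
    have b2: "\<bar>\<phi> (- w) z\<bar> \<le> norm z" using wb by (intro \<phi>b1) (simp add: dual_ball_def)
    have b3: "\<bar>\<psi> d z\<bar> \<le> norm z" for d by (rule \<psi>b)
    have sum: "\<bar>p + q\<bar> \<le> 2 * norm z" if "\<bar>p\<bar> \<le> norm z" "\<bar>q\<bar> \<le> norm z" for p q :: real
      using that abs_triangle_ineq[of p q] by linarith
    consider (c1) "\<exists>\<alpha>\<in>A. w \<in> B \<alpha>" | (c2) "\<not> (\<exists>\<alpha>\<in>A. w \<in> B \<alpha>)" "\<exists>\<alpha>\<in>A. - w \<in> B \<alpha>"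
      | (c3) "\<not> (\<exists>\<alpha>\<in>A. w \<in> B \<alpha>)" "\<not> (\<exists>\<alpha>\<in>A. - w \<in> B \<alpha>)" by blast
    then show ?thesis
    proof cases
      case c1
      then have "E z w = \<phi> w z + \<psi> (fA (sel w)) z" unfolding E_def by simp
      then show ?thesis using sum[OF b1 b3] by simp
    next
      case c2
      then have "E z w = - \<phi> (- w) z + \<psi> (fA (sel (- w))) z" unfolding E_def by simp
      moreover have "\<bar>- \<phi> (- w) z\<bar> \<le> norm z" using b2 by simp
      moreover have "\<bar>- \<phi> (- w) z + \<psi> (fA (sel (- w))) z\<bar> \<le> 2 * norm z"
        by (rule sum[OF calculation(2) b3])
      ultimately show ?thesis by simp
    next
      case c3
      then have "E z w = \<phi> w z" unfolding E_def by simp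
      then show ?thesis using b1 norm_ge_zero[of z] by linarith
    qed
  qed
  have EY: "E (jZ y) w = blinfun_apply w (jW y)" for y w
    unfolding E_def by (simp add: \<phi>Y \<psi>Y uminus_blinfun.rep_eq)
  have EB: "E z w = \<phi> w z + \<psi> (fA \<alpha>) z \<and> E z (- w) = - \<phi> w z + \<psi> (fA \<alpha>) z"
    if a: "\<alpha> \<in> A" "w \<in> B \<alpha>" for z w \<alpha>
  proof -
    have sw: "sel w = \<alpha>"
    proof -
      have "sel w \<in> A \<and> w \<in> B (sel w)" unfolding sel_def by (rule someI[of _ \<alpha>]) (use a in blast)
      then show ?thesis using assms(7)[of "sel w" \<alpha>] a by blast
    qed
    have "\<not> (\<exists>\<gamma>\<in>A. - w \<in> B \<gamma>)"
    proof
      assume "\<exists>\<gamma>\<in>A. - w \<in> B \<gamma>"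
      then have "- w \<in> (\<Union>\<alpha>\<in>A. B \<alpha>)" by blast
      moreover have "- w \<in> uminus ` (\<Union>\<alpha>\<in>A. B \<alpha>)" using a by blast
      ultimately show False using assms(8) by blast
    qed
    note nc = this
    have c1: "\<exists>\<alpha>\<in>A. w \<in> B \<alpha>" using a by blast
    have e1: "E z w = \<phi> w z + \<psi> (fA \<alpha>) z" unfolding E_def using c1 sw by simp
    have c2: "\<exists>\<gamma>\<in>A. - (- w) \<in> B \<gamma>" using a by auto
    have e2: "E z (- w) = - \<phi> w z + \<psi> (fA \<alpha>) z" unfolding E_def using nc c2 sw by simp
    show ?thesis using e1 e2 by simp
  qed
  have tsne: "topspace ?X \<noteq> {}" by (auto simp: topspace_ws dual_ball_def intro: exI[of _ 0])
  have Elinf: "E z \<in> linf ?X" for z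
    unfolding linf_def topspace_ws using Eb by blast
  have mKne: "(\<lambda>k. 0) \<in> mK ?X" by (rule zero_mK) simp
  have nonneg: "0 \<le> sup_norm ?X (\<lambda>k. E z k - g k)" if "g \<in> mK ?X" for z g
  proof (rule sup_norm_lower[OF Elinf that])
    show "second_category_in ?X (topspace ?X)"
      unfolding second_category_in_def using open_not_first_category[OF openin_topspace tsne] by blast
  qed simp
  have core: "norm z \<le> 4 * sup_norm ?X (\<lambda>k. E z k - g k)" if g: "g \<in> mK ?X" for z g
  proof -
    define s where "s = sup_norm ?X (\<lambda>k. E z k - g k)"
    define \<delta> where "\<delta> = infdist z Y"
    have claimA: "\<delta> \<le> s"
    proof (rule field_le_epsilon)
      fix e :: real assume e: "0 < e"
      define \<epsilon> where "\<epsilon> = e / 2"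
      have \<epsilon>: "\<epsilon> > 0" using e \<epsilon>_def by simp
      have "z \<in> closure {d + y | d y. d \<in> D \<and> y \<in> Y}" using dm unfolding dense_mod_def by simp
      then obtain u where "u \<in> {d + y | d y. d \<in> D \<and> y \<in> Y}" "dist u z < \<epsilon>"
        using \<epsilon> closure_approachable by blast
      then obtain d y' where d: "d \<in> D" "y' \<in> Y" "u = d + y'" and du: "dist u z < \<epsilon>" by blast
      obtain \<alpha> where \<alpha>: "\<alpha> \<in> A" "fA \<alpha> = d" using bij d(1) by (metis bij_betw_imp_surj_on imageE)
      have \<delta>d: "\<delta> - \<epsilon> \<le> infdist d Y"
        unfolding infdist_notempty[OF Yne]
      proof (rule cINF_greatest[OF Yne])
        fix a assume a: "a \<in> Y"
        have "\<delta> \<le> dist z (a + y')" unfolding \<delta>_def by (rule infdist_le[OF Yadd[OF a d(2)]])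
        also have "\<dots> \<le> dist z u + dist u (a + y')" by (rule dist_triangle)
        also have "dist u (a + y') = dist d a" using d(3) by (simp add: dist_norm)
        finally show "\<delta> - \<epsilon> \<le> dist d a" using du by (simp add: dist_commute)
      qed
      define b where "b = \<psi> (fA \<alpha>) z"
      have "z = d + y' + (z - u)" using d(3) by simp
      then have "b = \<psi> d d + \<psi> d y' + \<psi> d (z - u)" unfolding b_def \<alpha>(2)
        by (metis linear_add[OF \<psi>l])
      moreover have "\<psi> d y' = 0" using d(2) \<psi>Y unfolding Y_def by auto
      moreover have "\<bar>\<psi> d (z - u)\<bar> < \<epsilon>" using \<psi>b[of d "z - u"] du by (simp add: dist_norm norm_minus_commute)
      ultimately have bge: "\<delta> - 2 * \<epsilon> \<le> b" using \<delta>d \<psi>d[of d] by simp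
      define S1 where "S1 = {w \<in> B \<alpha>. b \<le> \<bar>E z w\<bar>}"
      define S2 where "S2 = {w \<in> B \<alpha>. b \<le> \<bar>E z (- w)\<bar>}"
      have cover: "B \<alpha> \<subseteq> S1 \<union> S2"
      proof
        fix w assume w: "w \<in> B \<alpha>"
        have "b \<le> \<bar>E z w\<bar> \<or> b \<le> \<bar>E z (- w)\<bar>" using EB[OF \<alpha>(1) w, of z] unfolding b_def by linarith
        then show "w \<in> S1 \<union> S2" using w unfolding S1_def S2_def by blast
      qed
      have Bsc: "second_category_in ?X (B \<alpha>)" using assms(6)[OF \<alpha>(1)] .
      then have Bsub: "B \<alpha> \<subseteq> topspace ?X" unfolding second_category_in_def by blast
      have "b \<le> s"
      proof (cases "first_category_in ?X S1")
        case False
        have "second_category_in ?X S1" unfolding second_category_in_def using False Bsub S1_def by blast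
        then show ?thesis unfolding s_def by (rule sup_norm_lower[OF Elinf g]) (simp add: S1_def)
      next
        case True
        have "\<not> first_category_in ?X S2"
        proof
          assume "first_category_in ?X S2"
          then have "first_category_in ?X (S1 \<union> S2)" using True fc_Un by blast
          then have "first_category_in ?X (B \<alpha>)" using cover fc_subset by blast
          then show False using Bsc unfolding second_category_in_def by blast
        qed
        note nS2 = this
        have nf: "\<not> first_category_in ?X (uminus ` S2)"
        proof
          assume "first_category_in ?X (uminus ` S2)"
          then have "first_category_in ?X (uminus ` uminus ` S2)" by (rule fc_homeo[OF homeo_uminus])
          then show False using nS2 by (simp add: image_image)
        qed
        have "uminus ` S2 \<subseteq> topspace ?X"
          using Bsub unfolding S2_def topspace_ws dual_ball_def by auto
        then have "second_category_in ?X (uminus ` S2)" unfolding second_category_in_def using nf by blast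
        then show ?thesis unfolding s_def by (rule sup_norm_lower[OF Elinf g]) (auto simp: S2_def)
      qed
      then show "\<delta> \<le> s + e" using bge \<epsilon>_def by simp
    qed
    have claimB: "norm z \<le> 4 * s + e" if e: "e > 0" for e
    proof -
      define \<eta> where "\<eta> = e / 4"
      have \<eta>: "\<eta> > 0" using e \<eta>_def by simp
      obtain y where y: "dist z (jZ y) < \<delta> + \<eta>"
      proof (rule ccontr)
        assume "\<not> thesis"
        then have "\<forall>y. \<delta> + \<eta> \<le> dist z (jZ y)" using that by (meson not_le)
        then have "\<delta> + \<eta> \<le> \<delta>" unfolding \<delta>_def infdist_notempty[OF Yne]
          by (intro cINF_greatest[OF Yne]) (auto simp: Y_def)
        then show False using \<eta> by simp
      qed
      define r where "r = z - jZ y"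
      have rn: "norm r < \<delta> + \<eta>" using y by (simp add: r_def dist_norm)
      define x where "x = jW y"
      let ?h = "\<lambda>t::real. (t *\<^sub>R x, t * norm x)"
      have lin: "linear ?h" by (rule linearI) (simp_all add: algebra_simps)
      have "\<exists>g. linear g \<and> (\<forall>v a. (v,a)\<in>range ?h \<longrightarrow> g v = a) \<and> (\<forall>v. \<bar>g v\<bar> \<le> 1 * norm v)"
      proof (rule HB_norm)
        show "subspace (range ?h)" by (rule linear_subspace_image[OF lin subspace_UNIV])
        show "a = b" if hyp: "(v,a) \<in> range ?h" "(v,b) \<in> range ?h" for v a b
        proof -
          obtain t1 t2 where p: "(v,a) = ?h t1" "(v,b) = ?h t2" using hyp by blast
          then have e: "t1 *\<^sub>R x = t2 *\<^sub>R x" "a = t1 * norm x" "b = t2 * norm x" by auto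
          show ?thesis
          proof (cases "x = 0")
            case True then show ?thesis using e by simp
          next
            case False
            then have "t1 = t2" using e(1) by (simp add: scaleR_cancel_right)
            then show ?thesis using e by simp
          qed
        qed
        show "a \<le> 1 * norm v" if hyp: "(v,a) \<in> range ?h" for v a
          using hyp by (auto intro!: mult_right_mono)
      qed simp
      then obtain g0 where g0: "linear g0" "\<forall>v a. (v,a)\<in>range ?h \<longrightarrow> g0 v = a" "\<forall>v. \<bar>g0 v\<bar> \<le> 1 * norm v"
        by blast
      have bl: "bounded_linear g0"
        using g0 by (intro bounded_linear_intro[where K=1]) (auto simp: linear_add linear_scale)
      define w0 where "w0 = Blinfun g0"
      have w0a: "blinfun_apply w0 = g0" unfolding w0_def using bl by (simp add: bounded_linear_Blinfun_apply)
      have w0n: "norm w0 \<le> 1" by (rule norm_blinfun_bound) (use g0 w0a in auto)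
      have w0x: "blinfun_apply w0 x = norm x" using g0(2)[rule_format, of x "norm x"] w0a
        by (force intro: image_eqI[of _ _ 1])
      define U where "U = {w \<in> topspace ?X. \<bar>blinfun_apply w x\<bar> \<in> {norm y - \<eta> <..}}"
      have Uo: "openin ?X U" unfolding U_def
        by (rule openin_continuous_map_preimage[OF continuous_map_real_abs[OF cont_eval]]) simp
      have "w0 \<in> U" unfolding U_def topspace_ws dual_ball_def using w0n w0x \<eta> x_def jWn by simp
      then have Usc: "second_category_in ?X U"
        unfolding second_category_in_def using open_not_first_category[OF Uo] openin_subset[OF Uo] by blast
      have "norm y - \<eta> - 2 * norm r \<le> s" unfolding s_def
      proof (rule sup_norm_lower[OF Elinf g Usc])
        fix w assume w: "w \<in> U"
        then have wb: "w \<in> dual_ball" unfolding U_def topspace_ws by simp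
        have "E z w = E (1 *\<^sub>R jZ y + 1 *\<^sub>R r) w" by (simp add: r_def)
        also have "\<dots> = E (jZ y) w + E r w" using Elin[of 1 "jZ y" 1 r w] by simp
        finally have "E z w = blinfun_apply w x + E r w" by (simp add: EY x_def)
        moreover have "\<bar>E r w\<bar> \<le> 2 * norm r" using Eb[OF wb] .
        moreover have "norm y - \<eta> < \<bar>blinfun_apply w x\<bar>" using w unfolding U_def by simp
        ultimately show "norm y - \<eta> - 2 * norm r \<le> \<bar>E z w\<bar>" by linarith
      qed
      moreover have "norm z \<le> norm y + norm r"
        using norm_triangle_ineq[of "jZ y" r] jZn[of y] by (simp add: r_def)
      ultimately show ?thesis using rn claimA \<eta>_def by linarith
    qed
    show ?thesis using field_le_epsilon[OF claimB] s_def by simp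
  qed
  have low: "1/4 * norm z \<le> m0_norm ?X (E z)" for z
    unfolding m0_norm_def
  proof (rule cINF_greatest)
    show "mK ?X \<noteq> {}" using mKne by blast
    fix g assume "g \<in> mK ?X"
    then have "norm z \<le> 4 * sup_norm ?X (\<lambda>k. E z k - g k)" by (rule core)
    then show "1/4 * norm z \<le> sup_norm ?X (\<lambda>k. E z k - g k)" by simp
  qed
  have upp: "m0_norm ?X (E z) \<le> 2 * norm z" for z
  proof -
    have bdd: "bdd_below ((\<lambda>g. sup_norm ?X (\<lambda>k. E z k - g k)) ` mK ?X)"
      using nonneg by (intro bdd_belowI2[where m=0]) auto
    have up: "sup_norm ?X (\<lambda>k. E z k - (\<lambda>k. 0) k) \<le> 2 * norm z"
      by (rule sup_norm_upper[OF tsne]) (simp add: Eb topspace_ws)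
    show ?thesis
      unfolding m0_norm_def
      by (rule cINF_lower2[where f="\<lambda>g. sup_norm ?X (\<lambda>k. E z k - g k)" and x="\<lambda>k. 0", OF bdd mKne])
        (use up in simp)
  qed
  have i1: "\<forall>z. E z \<in> linf ?X" using Elinf by blast
  have i2: "\<forall>a b z z'. same_class ?X (E (a *\<^sub>R z + b *\<^sub>R z')) (\<lambda>k. a * E z k + b * E z' k)"
    unfolding same_class_def by (intro allI zero_mK) (simp add: Elin)
  have i3: "\<exists>c C. 0 < c \<and> (\<forall>z. c * norm z \<le> m0_norm ?X (E z) \<and> m0_norm ?X (E z) \<le> C * norm z)"
    using low upp by (intro exI[of _ "1/4"] exI[of _ "2"]) simp
  have iso: "iso_embedding_m0 ?X E" unfolding iso_embedding_m0_def using i1 i2 i3 by blast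
  have sc: "\<forall>y. same_class ?X (E (jZ y)) (\<lambda>w'. blinfun_apply w' (jW y))"
    unfolding same_class_def by (intro allI zero_mK) (simp add: EY)
  show ?thesis using iso sc by blast
qed

end
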